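(* Consider, for fixed iteration $t$ and entry, the problem $$\textbf{P3}:\ \min_{b>0,\ \beta_1,\dots,\beta_U\in\{0,1\}} R(b,\beta)=\frac{L\sigma^2}{2\big(\sum_{i=1}^U\beta_iK_ib\big)^2}+\frac{\sum_{i=1}^UK_i\rho_1(1-\beta_i)}{2LK}$$ subject to $\big|\frac{\beta_iK_ib}{h_i}\big|^2(|w|+\eta)^2\le P_i^{\max}$ for all $i$ (with $R=+\infty$ if all $\beta_i=0$). For $k=1,\dots,U$ let $$b^{(k)}=\Big|\frac{\sqrt{P_k^{\max}}\,h_k}{K_k(|w|+\eta)}\Big|,\qquad \beta^{(k)}_i=\begin{cases}1,& \big|\frac{K_ib^{(k)}}{h_i}\big|^2(|w|+\eta)^2\le P_i^{\max},\\0,&\text{otherwise,}\end{cases}$$ and $\mathcal{S}=\{(b^{(k)},\beta^{(k)}):k=1,\dots,U\}$. Then $\textbf{P3}$ has an optimal solution belonging to $\mathcal{S}$; i.e. $\min_{\textbf{P3}}R=\min_{(b,\beta)\in\mathcal{S}}R(b,\beta)$.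
   Context: Parameters: $U$ workers; $K_i>0$ is the number of samples at worker $i$, $K=\sum_iK_i$; $h_i\neq0$ the channel gain of worker $i$; $P_i^{\max}>0$ its maximum transmit power; $w$ the current (previous-iteration) global parameter entry known to the server and $\eta\ge0$ with $|w|+\eta>0$ a bound on the local update magnitude; $L,\rho_1,\sigma^2>0$ are constants (smoothness constant, gradient-bound constant, noise variance). $b$ is the common power scaling factor and $\beta_i$ indicates whether worker $i$ is selected. Note $\beta^{(k)}_i=1$ exactly when $b^{(k)}\le b^{(i)}$. *)

theory Defs
  imports Complex_Main "HOL-Library.Extended_Real"
begin

text \<open>Workers are indexed by 1..U. Ks i = K_i (number of samples), h i = channel gain
  (complex, nonzero), P i = P_i^max, sigma = noise standard deviation (sigma^2 the variance).\<close>

definition R3 :: "real \<Rightarrow> real \<Rightarrow> real \<Rightarrow> nat \<Rightarrow> (nat \<Rightarrow> nat) \<Rightarrow> real \<Rightarrow> (nat \<Rightarrow> real) \<Rightarrow> ereal" where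
  "R3 L \<rho>1 \<sigma> U Ks b \<beta> =
     (if (\<forall>i\<in>{1..U}. \<beta> i = 0) then \<infinity>
      else ereal (L * \<sigma>\<^sup>2 / (2 * (\<Sum>i=1..U. \<beta> i * real (Ks i) * b)\<^sup>2)
                  + (\<Sum>i=1..U. real (Ks i) * \<rho>1 * (1 - \<beta> i))
                    / (2 * L * real (\<Sum>i=1..U. Ks i))))"

definition feasible3 :: "nat \<Rightarrow> (nat \<Rightarrow> nat) \<Rightarrow> (nat \<Rightarrow> complex) \<Rightarrow> (nat \<Rightarrow> real) \<Rightarrow> real \<Rightarrow> real
    \<Rightarrow> real \<Rightarrow> (nat \<Rightarrow> real) \<Rightarrow> bool" where
  "feasible3 U Ks h P w \<eta> b \<beta> \<longleftrightarrow>
     b > 0 \<and> (\<forall>i\<in>{1..U}. \<beta> i \<in> {0, 1} \<and>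
        (cmod (complex_of_real (\<beta> i * real (Ks i) * b) / h i))\<^sup>2 * (\<bar>w\<bar> + \<eta>)\<^sup>2 \<le> P i)"

definition bk :: "(nat \<Rightarrow> nat) \<Rightarrow> (nat \<Rightarrow> complex) \<Rightarrow> (nat \<Rightarrow> real) \<Rightarrow> real \<Rightarrow> real \<Rightarrow> nat \<Rightarrow> real" where
  "bk Ks h P w \<eta> k =
     cmod (complex_of_real (sqrt (P k)) * h k / complex_of_real (real (Ks k) * (\<bar>w\<bar> + \<eta>)))"

definition betak :: "(nat \<Rightarrow> nat) \<Rightarrow> (nat \<Rightarrow> complex) \<Rightarrow> (nat \<Rightarrow> real) \<Rightarrow> real \<Rightarrow> real \<Rightarrow> nat \<Rightarrow> nat \<Rightarrow> real" where
  "betak Ks h P w \<eta> k i =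
     (if (cmod (complex_of_real (real (Ks i) * bk Ks h P w \<eta> k) / h i))\<^sup>2 * (\<bar>w\<bar> + \<eta>)\<^sup>2 \<le> P i
      then 1 else 0)"

end

theory Submission
  imports Defs
begin

lemma cond_iff:
  fixes K :: real and hh :: complex and PP a x :: real
  assumes "K > 0" "hh \<noteq> 0" "PP > 0" "a > 0" "x \<ge> 0"
  shows "(cmod (complex_of_real (K * x) / hh))\<^sup>2 * a\<^sup>2 \<le> PP \<longleftrightarrow>
         x \<le> sqrt PP * cmod hh / (K * a)"
proof -
  have hp: "cmod hh > 0" using assms by simp
  have e: "cmod (complex_of_real (K * x) / hh) = K * x / cmod hh"
    using assms by (simp add: norm_divide del: of_real_mult)
  have "(cmod (complex_of_real (K * x) / hh))\<^sup>2 * a\<^sup>2 = (K * x * a / cmod hh)\<^sup>2"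
    unfolding e by (simp add: power_divide power_mult_distrib)
  also have "\<dots> \<le> PP \<longleftrightarrow> K * x * a / cmod hh \<le> sqrt PP"
  proof -
    have nn: "K * x * a / cmod hh \<ge> 0" using assms hp by simp
    show ?thesis
      by (metis nn real_le_rsqrt real_sqrt_le_iff real_sqrt_pow2 assms(3) less_imp_le
          real_sqrt_ge_zero power_mono)
  qed
  also have "\<dots> \<longleftrightarrow> x \<le> sqrt PP * cmod hh / (K * a)"
    using assms hp by (simp add: field_simps)
  finally show ?thesis .
qed

lemma bk_eq:
  assumes "Ks k > 0" "P k > 0" "\<bar>w\<bar> + \<eta> > 0"
  shows "bk Ks h P w \<eta> k = sqrt (P k) * cmod (h k) / (real (Ks k) * (\<bar>w\<bar> + \<eta>))"
  using assms unfolding bk_def by (simp only: norm_divide norm_mult norm_of_real, simp add: abs_mult)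

theorem theorem3:
  fixes U :: nat and Ks :: "nat \<Rightarrow> nat" and h :: "nat \<Rightarrow> complex" and P :: "nat \<Rightarrow> real"
    and w \<eta> L \<rho>1 \<sigma> :: real
  assumes "U \<ge> 1"
    and "\<forall>i\<in>{1..U}. Ks i > 0"
    and "\<forall>i\<in>{1..U}. h i \<noteq> 0"
    and "\<forall>i\<in>{1..U}. P i > 0"
    and "\<eta> \<ge> 0" and "\<bar>w\<bar> + \<eta> > 0"
    and "L > 0" and "\<rho>1 > 0" and "\<sigma> > 0"
  shows "\<exists>k\<in>{1..U}.
           feasible3 U Ks h P w \<eta> (bk Ks h P w \<eta> k) (betak Ks h P w \<eta> k) \<and>
           (\<forall>b \<beta>. feasible3 U Ks h P w \<eta> b \<beta> \<longrightarrow>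
              R3 L \<rho>1 \<sigma> U Ks (bk Ks h P w \<eta> k) (betak Ks h P w \<eta> k) \<le> R3 L \<rho>1 \<sigma> U Ks b \<beta>)"
proof -
  define a where "a = \<bar>w\<bar> + \<eta>"
  have a: "a > 0" using assms a_def by simp
  define c where "c = bk Ks h P w \<eta>"
  have ceq: "\<And>i. i \<in> {1..U} \<Longrightarrow> c i = sqrt (P i) * cmod (h i) / (real (Ks i) * a)"
    using assms bk_eq unfolding c_def a_def by blast
  have cpos: "\<And>i. i \<in> {1..U} \<Longrightarrow> c i > 0"
    using assms ceq by (simp add: a)
  have iff: "\<And>i x. i \<in> {1..U} \<Longrightarrow> x \<ge> 0 \<Longrightarrow>
      (cmod (complex_of_real (real (Ks i) * x) / h i))\<^sup>2 * a\<^sup>2 \<le> P i \<longleftrightarrow> x \<le> c i"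
  proof -
    fix i and x :: real assume i: "i \<in> {1..U}" and x: "x \<ge> 0"
    show "(cmod (complex_of_real (real (Ks i) * x) / h i))\<^sup>2 * a\<^sup>2 \<le> P i \<longleftrightarrow> x \<le> c i"
      using cond_iff[of "real (Ks i)" "h i" "P i" a x] assms(2,3,4) i x a ceq[OF i] by simp
  qed
  have betaeq: "\<And>k i. k \<in> {1..U} \<Longrightarrow> i \<in> {1..U} \<Longrightarrow>
      betak Ks h P w \<eta> k i = (if c k \<le> c i then 1 else 0)"
  proof -
    fix k i assume k: "k \<in> {1..U}" and i: "i \<in> {1..U}"
    have ck: "c k \<ge> 0" using cpos[OF k] by simp
    show "betak Ks h P w \<eta> k i = (if c k \<le> c i then 1 else 0)"
      unfolding betak_def c_def[symmetric] a_def[symmetric] using iff[OF i ck] by simp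
  qed
  have feas: "feasible3 U Ks h P w \<eta> (c k) (betak Ks h P w \<eta> k)" if k: "k \<in> {1..U}" for k
    unfolding feasible3_def
  proof (intro conjI ballI)
    show "c k > 0" using cpos k by simp
  next
    fix i assume i: "i \<in> {1..U}"
    show "betak Ks h P w \<eta> k i \<in> {0, 1}" using betaeq[OF k i] by simp
    show "(cmod (complex_of_real (betak Ks h P w \<eta> k i * real (Ks i) * c k) / h i))\<^sup>2 *
          (\<bar>w\<bar> + \<eta>)\<^sup>2 \<le> P i"
    proof (cases "c k \<le> c i")
      case True
      then show ?thesis using betaeq[OF k i] iff[OF i, of "c k"] cpos[OF k] a_def by simp
    next
      case False
      then show ?thesis using betaeq[OF k i] assms(4) i by (simp add: less_imp_le)
    qed
  qed
  have opt: "\<exists>k\<in>{1..U}. R3 L \<rho>1 \<sigma> U Ks (c k) (betak Ks h P w \<eta> k) \<le> R3 L \<rho>1 \<sigma> U Ks b \<beta>"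
    if fb: "feasible3 U Ks h P w \<eta> b \<beta>" for b \<beta>
  proof (cases "\<forall>i\<in>{1..U}. \<beta> i = 0")
    case True
    then show ?thesis using assms(1) unfolding R3_def by (intro bexI[of _ 1]) auto
  next
    case False
    then obtain j where j: "j \<in> {1..U}" "\<beta> j \<noteq> 0" by blast
    have b0: "b > 0" using fb unfolding feasible3_def by simp
    have b01: "\<And>i. i \<in> {1..U} \<Longrightarrow> \<beta> i \<in> {0,1}" using fb unfolding feasible3_def by simp
    have ble: "\<And>i. i \<in> {1..U} \<Longrightarrow> \<beta> i = 1 \<Longrightarrow> b \<le> c i"
    proof -
      fix i assume i: "i \<in> {1..U}" and "\<beta> i = 1"
      have "(cmod (complex_of_real (\<beta> i * real (Ks i) * b) / h i))\<^sup>2 * a\<^sup>2 \<le> P i"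
        using fb i unfolding feasible3_def a_def by blast
      then have "(cmod (complex_of_real (real (Ks i) * b) / h i))\<^sup>2 * a\<^sup>2 \<le> P i"
        using `\<beta> i = 1` by simp
      then show "b \<le> c i" using iff[OF i] b0 by simp
    qed
    have j1: "\<beta> j = 1" using b01[OF j(1)] j(2) by simp
    define T where "T = {i\<in>{1..U}. b \<le> c i}"
    have Tf: "finite T" and Tne: "T \<noteq> {}" using ble[OF j(1) j1] j(1) unfolding T_def by auto
    define m where "m = Min (c ` T)"
    have "m \<in> c ` T" using Tf Tne unfolding m_def by (intro Min_in) auto
    then obtain k where kT: "k \<in> T" and km: "c k = m" by auto
    have kmin: "\<forall>i\<in>T. c k \<le> c i" using Tf unfolding km m_def by simp
    have k: "k \<in> {1..U}" and bk: "b \<le> c k" using kT unfolding T_def by auto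
    define bt where "bt = betak Ks h P w \<eta> k"
    have btge: "\<And>i. i \<in> {1..U} \<Longrightarrow> \<beta> i \<le> bt i"
    proof -
      fix i assume i: "i \<in> {1..U}"
      show "\<beta> i \<le> bt i"
      proof (cases "\<beta> i = 1")
        case True
        then have "i \<in> T" using ble[OF i] i unfolding T_def by auto
        then show ?thesis using kmin betaeq[OF k i] True unfolding bt_def by auto
      next
        case False
        then have "\<beta> i = 0" using b01[OF i] by auto
        then show ?thesis using betaeq[OF k i] unfolding bt_def by auto
      qed
    qed
    have bt01: "\<And>i. i \<in> {1..U} \<Longrightarrow> bt i \<ge> 0" using betaeq[OF k] unfolding bt_def by simp
    have btk: "bt k = 1" using betaeq[OF k k] unfolding bt_def by simp
    have b0': "\<And>i. i \<in> {1..U} \<Longrightarrow> \<beta> i \<ge> 0" using b01 by fastforce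
    define S1 where "S1 = (\<Sum>i=1..U. bt i * real (Ks i) * c k)"
    define S2 where "S2 = (\<Sum>i=1..U. \<beta> i * real (Ks i) * b)"
    have S12: "S2 \<le> S1" unfolding S1_def S2_def
    proof (rule sum_mono)
      fix i assume i: "i \<in> {1..U}"
      show "\<beta> i * real (Ks i) * b \<le> bt i * real (Ks i) * c k"
        using btge[OF i] b0'[OF i] bk b0 by (intro mult_mono) (auto intro: mult_mono)
    qed
    have S2pos: "S2 > 0"
    proof -
      have "0 < \<beta> j * real (Ks j) * b" using j1 assms(2) j(1) b0 by simp
      also have "\<dots> \<le> S2" unfolding S2_def
        by (rule member_le_sum) (use j(1) b0 b0' in auto)
      finally show ?thesis .
    qed
    define D where "D = 2 * L * real (\<Sum>i=1..U. Ks i)"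
    have D: "D > 0"
    proof -
      have "Ks j \<le> (\<Sum>i=1..U. Ks i)" by (rule member_le_sum) (use j(1) in auto)
      moreover have "Ks j > 0" using assms(2) j(1) by blast
      ultimately have "(\<Sum>i=1..U. Ks i) > 0" by linarith
      then have "real (\<Sum>i=1..U. Ks i) > 0" by (simp only: of_nat_0_less_iff)
      then show ?thesis using assms(7) unfolding D_def by (simp only: mult_pos_pos zero_less_numeral)
    qed
    define A1 where "A1 = (\<Sum>i=1..U. real (Ks i) * \<rho>1 * (1 - bt i))"
    define A2 where "A2 = (\<Sum>i=1..U. real (Ks i) * \<rho>1 * (1 - \<beta> i))"
    have A12: "A1 \<le> A2" unfolding A1_def A2_def
    proof (rule sum_mono)
      fix i assume i: "i \<in> {1..U}"
      show "real (Ks i) * \<rho>1 * (1 - bt i) \<le> real (Ks i) * \<rho>1 * (1 - \<beta> i)"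
        using btge[OF i] assms(8) by (intro mult_left_mono) auto
    qed
    have sq: "S2\<^sup>2 \<le> S1\<^sup>2" using S12 S2pos by (intro power_mono) auto
    have t1: "L * \<sigma>\<^sup>2 / (2 * S1\<^sup>2) \<le> L * \<sigma>\<^sup>2 / (2 * S2\<^sup>2)"
    proof (rule divide_left_mono)
      show "2 * S2\<^sup>2 \<le> 2 * S1\<^sup>2" using sq by simp
      show "0 \<le> L * \<sigma>\<^sup>2" using assms(7) by simp
      have "S1 > 0" using S12 S2pos by linarith
      then show "0 < 2 * S1\<^sup>2 * (2 * S2\<^sup>2)" using S2pos by simp
    qed
    have t2: "A1 / D \<le> A2 / D" using A12 D by (simp add: divide_right_mono)
    have nz1: "\<not> (\<forall>i\<in>{1..U}. bt i = 0)" using btk k by (intro notI) (drule bspec[OF _ k], simp)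
    have "R3 L \<rho>1 \<sigma> U Ks (c k) bt = ereal (L * \<sigma>\<^sup>2 / (2 * S1\<^sup>2) + A1 / D)"
      unfolding R3_def S1_def A1_def D_def using nz1 by simp
    also have "\<dots> \<le> ereal (L * \<sigma>\<^sup>2 / (2 * S2\<^sup>2) + A2 / D)" using t1 t2 by simp
    also have "\<dots> = R3 L \<rho>1 \<sigma> U Ks b \<beta>"
      unfolding R3_def S2_def A2_def D_def using False by simp
    finally show ?thesis using k unfolding bt_def by blast
  qed
  show ?thesis
  proof (cases "\<exists>b \<beta>. feasible3 U Ks h P w \<eta> b \<beta> \<and> \<not> (\<forall>i\<in>{1..U}. \<beta> i = 0)")
    case False
    have "R3 L \<rho>1 \<sigma> U Ks b \<beta> = \<infinity>" if "feasible3 U Ks h P w \<eta> b \<beta>" for b \<beta>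
      using False that unfolding R3_def by auto
    then show ?thesis using feas assms(1) unfolding c_def by (intro bexI[of _ 1]) auto
  next
    case True
    define Rk where "Rk = (\<lambda>k. R3 L \<rho>1 \<sigma> U Ks (c k) (betak Ks h P w \<eta> k))"
    have "finite (Rk ` {1..U})" "Rk ` {1..U} \<noteq> {}" using assms(1) by auto
    define m where "m = Min (Rk ` {1..U})"
    have "m \<in> Rk ` {1..U}" using assms(1) unfolding m_def by (intro Min_in) auto
    then obtain k where k: "k \<in> {1..U}" and km: "Rk k = m" by auto
    have kmin: "\<forall>i\<in>{1..U}. Rk k \<le> Rk i" unfolding km m_def by simp
    have "\<forall>b \<beta>. feasible3 U Ks h P w \<eta> b \<beta> \<longrightarrow> Rk k \<le> R3 L \<rho>1 \<sigma> U Ks b \<beta>"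
    proof (intro allI impI)
      fix b \<beta> assume "feasible3 U Ks h P w \<eta> b \<beta>"
      then obtain i where "i \<in> {1..U}" "Rk i \<le> R3 L \<rho>1 \<sigma> U Ks b \<beta>"
        using opt unfolding Rk_def by blast
      then show "Rk k \<le> R3 L \<rho>1 \<sigma> U Ks b \<beta>" using kmin order_trans by blast
    qed
    then show ?thesis using k feas[OF k] unfolding Rk_def c_def by blast
  qed
qed

end
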